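(* Let $n\ge2$, $r\ge3n+2$ and $s=r(3n+2)+3$. The numerical semigroup $\Gamma_{B_{nr}}=\langle s,\,s+3,\,s+3n+1,\,s+3n+2\rangle$ is homogeneous.
   Context: For a numerical semigroup $\Gamma=\langle n_1,\dots,n_e\rangle$ (minimally generated, here with $n_1=s$) and $0\neq t\in\Gamma$, the set of lengths is $\mathcal T(t)=\{\sum_i r_i : t=\sum_i r_in_i,\ r_i\in\mathbb{N}\}$. A subset $T\subset\Gamma$ is homogeneous if it is empty or $\mathcal T(t)$ is a singleton for all $0\neq t\in T$. $\Gamma$ is homogeneous if the Apéry set $\mathrm{Ap}(\Gamma,n_1)=\{t\in\Gamma: t-n_1\notin\Gamma\}$ is homogeneous. *)

theory Defs
  imports Main
begin

text \<open>A numerical semigroup is given by its (minimal) generator list g = [n_1,...,n_e].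
  A factorization of t is a coefficient vector r (only indices i < length g matter).\<close>

definition semigroup_gen :: "nat list \<Rightarrow> nat set" where
  "semigroup_gen g = {t. \<exists>r::nat \<Rightarrow> nat. t = (\<Sum>i<length g. r i * g ! i)}"

definition lengths :: "nat list \<Rightarrow> nat \<Rightarrow> nat set" where
  "lengths g t = {(\<Sum>i<length g. r i) | r::nat \<Rightarrow> nat. t = (\<Sum>i<length g. r i * g ! i)}"

text \<open>Apery set Ap(Gamma, m) = {t in Gamma. t - m notin Gamma} (integer subtraction:
  if t < m then t - m is negative, hence not in Gamma).\<close>

definition apery :: "nat list \<Rightarrow> nat \<Rightarrow> nat set" where
  "apery g m = {t \<in> semigroup_gen g. \<not> (m \<le> t \<and> t - m \<in> semigroup_gen g)}"

definition homogeneous_set :: "nat list \<Rightarrow> nat set \<Rightarrow> bool" where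
  "homogeneous_set g T \<longleftrightarrow> T = {} \<or> (\<forall>t\<in>T. t \<noteq> 0 \<longrightarrow> (\<exists>l. lengths g t = {l}))"

definition homogeneous_semigroup :: "nat list \<Rightarrow> bool" where
  "homogeneous_semigroup g \<longleftrightarrow> homogeneous_set g (apery g (hd g))"

end

theory Submission
  imports Defs
begin

lemma sg4: "semigroup_gen [a0,a1,a2,a3] = {t. \<exists>x0 x1 x2 x3. t = x0*a0 + x1*a1 + x2*a2 + x3*a3}"
proof -
  have e: "\<And>r::nat\<Rightarrow>nat. (\<Sum>i<length [a0,a1,a2,a3]. r i * [a0,a1,a2,a3] ! i) = r 0*a0 + r 1*a1 + r 2*a2 + r 3*a3"
    by (simp add: numeral_eq_Suc lessThan_Suc)
  show ?thesis
  proof (rule set_eqI, rule iffI)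
    fix t assume "t \<in> semigroup_gen [a0,a1,a2,a3]"
    then show "t \<in> {t. \<exists>x0 x1 x2 x3. t = x0*a0 + x1*a1 + x2*a2 + x3*a3}"
      unfolding semigroup_gen_def e by blast
  next
    fix t assume "t \<in> {t. \<exists>x0 x1 x2 x3. t = x0*a0 + x1*a1 + x2*a2 + x3*a3}"
    then obtain x0 x1 x2 x3 where t: "t = x0*a0 + x1*a1 + x2*a2 + x3*a3" by blast
    let ?r = "\<lambda>i. [x0,x1,x2,x3] ! i"
    have "t = ?r 0*a0 + ?r 1*a1 + ?r 2*a2 + ?r 3*a3" using t by (simp add: numeral_eq_Suc)
    then show "t \<in> semigroup_gen [a0,a1,a2,a3]" unfolding semigroup_gen_def e by blast
  qed
qed

lemma len4: "lengths [a0,a1,a2,a3] t = {x0+x1+x2+x3 | x0 x1 x2 x3. t = x0*a0 + x1*a1 + x2*a2 + x3*a3}"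
proof -
  have e: "\<And>r::nat\<Rightarrow>nat. (\<Sum>i<length [a0,a1,a2,a3]. r i * [a0,a1,a2,a3] ! i) = r 0*a0 + r 1*a1 + r 2*a2 + r 3*a3"
    by (simp add: numeral_eq_Suc lessThan_Suc)
  have e2: "\<And>r::nat\<Rightarrow>nat. (\<Sum>i<length [a0,a1,a2,a3]. r i) = r 0 + r 1 + r 2 + r 3"
    by (simp add: numeral_eq_Suc lessThan_Suc)
  show ?thesis
  proof (rule set_eqI, rule iffI)
    fix l assume "l \<in> lengths [a0,a1,a2,a3] t"
    then show "l \<in> {x0+x1+x2+x3 | x0 x1 x2 x3. t = x0*a0 + x1*a1 + x2*a2 + x3*a3}"
      unfolding lengths_def e e2 by blast
  next
    fix l assume "l \<in> {x0+x1+x2+x3 | x0 x1 x2 x3. t = x0*a0 + x1*a1 + x2*a2 + x3*a3}"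
    then obtain x0 x1 x2 x3 where t: "t = x0*a0 + x1*a1 + x2*a2 + x3*a3" and l: "l = x0+x1+x2+x3" by blast
    let ?r = "\<lambda>i. [x0,x1,x2,x3] ! i"
    have "t = ?r 0*a0 + ?r 1*a1 + ?r 2*a2 + ?r 3*a3" "l = ?r 0 + ?r 1 + ?r 2 + ?r 3" using t l by (simp_all add: numeral_eq_Suc)
    then show "l \<in> lengths [a0,a1,a2,a3] t" unfolding lengths_def e e2 by blast
  qed
qed

lemma ineq:
  fixes n r s :: nat
  assumes "r \<ge> 3 * n + 2" and "s = r * (3 * n + 2) + 3" and n1: "n \<ge> 1"
  and eq: "x1*(s+3)+x2*(s+3*n+1)+x3*(s+3*n+2) = y1*(s+3)+y2*(s+3*n+1)+y3*(s+3*n+2)"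
  and b: "y2+y3 \<le> r+1"
  shows "x1+x2+x3 \<le> y1+y2+y3"
proof (rule ccontr)
  assume "\<not> ?thesis"
  then have k: "x1+x2+x3 \<ge> y1+y2+y3+1" by simp
  have "x2*(s+3) \<le> x2*(s+3*n+1)" "x3*(s+3) \<le> x3*(s+3*n+2)" using n1 by (intro mult_left_mono; simp)+
  moreover have "(x1+x2+x3)*(s+3) = x1*(s+3)+x2*(s+3)+x3*(s+3)" by (simp add: add_mult_distrib)
  ultimately have "(x1+x2+x3)*(s+3) \<le> x1*(s+3)+x2*(s+3*n+1)+x3*(s+3*n+2)"
    by linarith
  moreover have "(y1+y2+y3+1)*(s+3) \<le> (x1+x2+x3)*(s+3)" using k by (rule mult_right_mono) simp
  moreover have "y1*(s+3)+y2*(s+3*n+1)+y3*(s+3*n+2) + (y2+y3) \<le> (y1+y2+y3)*(s+3) + (y2+y3)*(3*n)"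
    by (simp add: algebra_simps)
  moreover have "(y2+y3)*(3*n) \<le> (r+1)*(3*n)" using b by (rule mult_right_mono) simp
  ultimately have "s + 3 \<le> (r+1)*(3*n)" using eq by simp
  then show False using assms(1,2) by (simp add: algebra_simps)
qed

lemma G_add: "u \<in> semigroup_gen [a0,a1,a2,a3] \<Longrightarrow> v \<in> semigroup_gen [a0,a1,a2,a3] \<Longrightarrow> u + v \<in> semigroup_gen [a0,a1,a2,a3]"
proof -
  assume "u \<in> semigroup_gen [a0,a1,a2,a3]" "v \<in> semigroup_gen [a0,a1,a2,a3]"
  then obtain x0 x1 x2 x3 y0 y1 y2 y3 where "u = x0*a0 + x1*a1 + x2*a2 + x3*a3" "v = y0*a0 + y1*a1 + y2*a2 + y3*a3"
    unfolding sg4 by blast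
  then have "u + v = (x0+y0)*a0 + (x1+y1)*a1 + (x2+y2)*a2 + (x3+y3)*a3" by (simp add: algebra_simps)
  then show ?thesis unfolding sg4 by blast
qed

lemma G_mem: "x0*a0 + x1*a1 + x2*a2 + x3*a3 \<in> semigroup_gen [a0,a1,a2,a3]"
  unfolding sg4 by blast

lemma L0:
  fixes n r s :: nat
  assumes "s = r*(3*n+2)+3" "j + w = r + 2"
  shows "j*(s+3*n+1) + w*(s+3*n+2) + j = (r+3)*s + 6*n+1"
proof -
  have "j*(s+3*n+1) + w*(s+3*n+2) + j = (j+w)*s + (j+w)*(3*n+2)" by (simp add: algebra_simps)
  also have "\<dots> = (r+2)*s + (r+2)*(3*n+2)" using assms(2) by simp
  also have "\<dots> = (r+3)*s + 6*n+1" using assms(1) by (simp add: algebra_simps)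
  finally show ?thesis .
qed

lemma Pmem:
  fixes n r s :: nat
  assumes r: "r \<ge> 3 * n + 2" and sdef: "s = r * (3 * n + 2) + 3" and jw: "j + w = r + 2"
  shows "\<exists>u\<in>semigroup_gen [s, s + 3, s + 3 * n + 1, s + 3 * n + 2]. j*(s+3*n+1) + w*(s+3*n+2) = s + u"
proof (cases "j \<ge> 3*n+2")
  case True
  then obtain k where k: "j = 3*n+2+k" using le_Suc_ex by blast
  let ?u = "0*s + 0*(s+3) + k*(s + 3 * n + 1) + (3*n+1+w)*(s + 3 * n + 2)"
  have "j*(s+3*n+1) + w*(s+3*n+2) = s + ?u" unfolding k by (simp add: algebra_simps)
  then show ?thesis using G_mem by blast
next
  case False
  define i where "i = 3*n+1-j"
  have i: "j + i = 3*n+1" using False unfolding i_def by simp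
  have P: "j*(s+3*n+1) + w*(s+3*n+2) = s + ((r+2)*s + 3*n + i)"
    using L0[OF sdef jw] i by (simp add: algebra_simps)
  have im: "i mod 3 = 0 \<or> i mod 3 = 1 \<or> i mod 3 = 2" by arith
  have "(r+2)*s + 3*n + i \<in> semigroup_gen [s, s + 3, s + 3 * n + 1, s + 3 * n + 2]"
  proof -
    define q where "q = i div 3"
    have iq: "i = 3*q + i mod 3" unfolding q_def by simp
    have qn: "q \<le> n" using i iq by linarith
    consider "i mod 3 = 0" | "i mod 3 = 1" | "i mod 3 = 2" using im by (elim disjE) simp_all
    then show ?thesis
    proof cases
      case 1
      have "n+q \<le> r+2" using r qn by linarith
      then obtain m where m: "r + 2 = (n+q) + m" using le_Suc_ex by blast
      have "(r+2)*s + 3*n + i = m*s + (n+q)*(s+3) + 0*(s + 3 * n + 1) + 0*(s + 3 * n + 2)"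
        unfolding m using iq 1 by (simp add: algebra_simps)
      then show ?thesis using G_mem by metis
    next
      case 2
      have "q+1 \<le> r+2" using r qn by linarith
      then obtain m where m: "r + 2 = (q+1) + m" using le_Suc_ex by blast
      have "(r+2)*s + 3*n + i = m*s + q*(s+3) + 1*(s + 3 * n + 1) + 0*(s + 3 * n + 2)"
        unfolding m using iq 2 by (simp add: algebra_simps)
      then show ?thesis using G_mem by metis
    next
      case 3
      have "q+1 \<le> r+2" using r qn by linarith
      then obtain m where m: "r + 2 = (q+1) + m" using le_Suc_ex by blast
      have "(r+2)*s + 3*n + i = m*s + q*(s+3) + 0*(s + 3 * n + 1) + 1*(s + 3 * n + 2)"
        unfolding m using iq 3 by (simp add: algebra_simps)
      then show ?thesis using G_mem by metis
    qed
  qed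
  then show ?thesis using P by blast
qed


lemma forb:
  fixes n r s :: nat
  assumes r: "r \<ge> 3 * n + 2" and sdef: "s = r * (3 * n + 2) + 3" and yz: "y + z \<ge> r + 2"
  shows "\<exists>u\<in>semigroup_gen [s, s + 3, s + 3 * n + 1, s + 3 * n + 2].
           x0*s + x1*(s+3) + y*(s + 3 * n + 1) + z*(s + 3 * n + 2) = s + u"
proof -
  define j where "j = min y (r+2)"
  define w where "w = r + 2 - j"
  have jw: "j + w = r + 2" "j \<le> y" "w \<le> z" using yz unfolding j_def w_def by auto
  obtain u where u: "u \<in> semigroup_gen [s, s + 3, s + 3 * n + 1, s + 3 * n + 2]"
    "j*(s+3*n+1) + w*(s+3*n+2) = s + u" using Pmem[OF r sdef jw(1)] by blast
  obtain y2 z2 where yz2: "y = j + y2" "z = w + z2" using jw le_Suc_ex by metis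
  let ?Q = "x0*s + x1*(s+3) + y2*(s + 3 * n + 1) + z2*(s + 3 * n + 2)"
  have "x0*s + x1*(s+3) + y*(s + 3 * n + 1) + z*(s + 3 * n + 2) = (j*(s+3*n+1) + w*(s+3*n+2)) + ?Q"
    unfolding yz2 by (simp add: algebra_simps)
  then have "x0*s + x1*(s+3) + y*(s + 3 * n + 1) + z*(s + 3 * n + 2) = s + (u + ?Q)" using u by simp
  moreover have "u + ?Q \<in> semigroup_gen [s, s + 3, s + 3 * n + 1, s + 3 * n + 2]"
    using G_add[OF u(1) G_mem] .
  ultimately show ?thesis by blast
qed

lemma apfact:
  fixes n r s :: nat
  assumes r: "r \<ge> 3 * n + 2" and sdef: "s = r * (3 * n + 2) + 3"
  and t: "t \<in> apery [s, s + 3, s + 3 * n + 1, s + 3 * n + 2] s"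
  and tf: "t = x0*s + x1*(s+3) + y*(s + 3 * n + 1) + z*(s + 3 * n + 2)"
  shows "x0 = 0 \<and> y + z \<le> r + 1"
proof -
  have nt: "\<not> (s \<le> t \<and> t - s \<in> semigroup_gen [s, s + 3, s + 3 * n + 1, s + 3 * n + 2])"
    using t unfolding apery_def by blast
  have "x0 = 0"
  proof (rule ccontr)
    assume "x0 \<noteq> 0"
    then obtain m where m: "x0 = Suc m" using not0_implies_Suc by blast
    have "t = s + (m*s + x1*(s+3) + y*(s + 3 * n + 1) + z*(s + 3 * n + 2))" using tf m by simp
    then show False using nt G_mem by (metis add_diff_cancel_left' le_add1)
  qed
  moreover have "y + z \<le> r + 1"
  proof (rule ccontr)
    assume "\<not> ?thesis"
    then have "y + z \<ge> r + 2" by simp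
    then obtain u where "u \<in> semigroup_gen [s, s + 3, s + 3 * n + 1, s + 3 * n + 2]" "t = s + u"
      using forb[OF r sdef, of y z x0 x1] tf by metis
    then show False using nt by simp
  qed
  ultimately show ?thesis by blast
qed

theorem mainTheorem7:
  fixes n r s :: nat
  assumes "n \<ge> 2" and "r \<ge> 3 * n + 2" and "s = r * (3 * n + 2) + 3"
  shows "homogeneous_semigroup [s, s + 3, s + 3 * n + 1, s + 3 * n + 2]"
  unfolding homogeneous_semigroup_def homogeneous_set_def
proof (rule disjI2, intro ballI impI)
  fix t assume t: "t \<in> apery [s, s + 3, s + 3 * n + 1, s + 3 * n + 2] (hd [s, s + 3, s + 3 * n + 1, s + 3 * n + 2])"
  then have tA: "t \<in> apery [s, s + 3, s + 3 * n + 1, s + 3 * n + 2] s" by simp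
  then have "t \<in> semigroup_gen [s, s + 3, s + 3 * n + 1, s + 3 * n + 2]" unfolding apery_def by blast
  then obtain x0 x1 x2 x3 where tx: "t = x0*s + x1*(s+3) + x2*(s + 3 * n + 1) + x3*(s + 3 * n + 2)"
    unfolding sg4 by blast
  have n1: "n \<ge> 1" using assms(1) by simp
  have "lengths [s, s + 3, s + 3 * n + 1, s + 3 * n + 2] t = {x0+x1+x2+x3}"
  proof
    show "{x0+x1+x2+x3} \<subseteq> lengths [s, s + 3, s + 3 * n + 1, s + 3 * n + 2] t"
      unfolding len4 using tx by blast
  next
    show "lengths [s, s + 3, s + 3 * n + 1, s + 3 * n + 2] t \<subseteq> {x0+x1+x2+x3}"
    proof
      fix l assume "l \<in> lengths [s, s + 3, s + 3 * n + 1, s + 3 * n + 2] t"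
      then obtain y0 y1 y2 y3 where ty: "t = y0*s + y1*(s+3) + y2*(s + 3 * n + 1) + y3*(s + 3 * n + 2)"
        and l: "l = y0+y1+y2+y3" unfolding len4 by blast
      have ax: "x0 = 0 \<and> x2 + x3 \<le> r + 1" using apfact[OF assms(2,3) tA tx] .
      have ay: "y0 = 0 \<and> y2 + y3 \<le> r + 1" using apfact[OF assms(2,3) tA ty] .
      have eq: "x1*(s+3)+x2*(s+3*n+1)+x3*(s+3*n+2) = y1*(s+3)+y2*(s+3*n+1)+y3*(s+3*n+2)"
        using tx ty ax ay by simp
      have "x1+x2+x3 \<le> y1+y2+y3" using ineq[OF assms(2,3) n1 eq] ay by blast
      moreover have "y1+y2+y3 \<le> x1+x2+x3" using ineq[OF assms(2,3) n1 eq[symmetric]] ax by blast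
      ultimately show "l \<in> {x0+x1+x2+x3}" using l ax ay by simp
    qed
  qed
  then show "\<exists>l. lengths [s, s + 3, s + 3 * n + 1, s + 3 * n + 2] t = {l}" by blast
qed

end
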